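(* There exists a constant $K>0$ such that for all $i\in\{1,\dots,6\}$ and all $(x,y)\in\mathcal D$, $$\max\big(|x_i(x,y)-z_i(x)|,\ |y_i(x,y)|\big)\le Ky .$$
   Context: Characterizing point: for any triangle (three points of the plane not all equal) there is a similitude mapping it onto a triangle with vertices $(0,0)$, $(1,0)$, $(x,y)$, $0\le x\le1/2$, $y\ge0$, sending its longest edge onto $[(0,0),(1,0)]$ and its shortest edge onto $[(0,0),(x,y)]$; $(x,y)$ is unique and is the characterizing point. $\mathcal D$ is the set of all characterizing points. For $(x,y)\in\mathcal D$ let $A=(0,0)$, $B=(x,y)$, $C=(1,0)$, $D,E,F$ the midpoints of $[A,B],[B,C],[C,A]$ and $G$ the barycenter of $ABC$; set $\mathcal T_1=\{A,D,G\}$, $\mathcal T_2=\{D,B,G\}$, $\mathcal T_3=\{B,E,G\}$, $\mathcal T_4=\{E,C,G\}$, $\mathcal T_5=\{C,F,G\}$, $\mathcal T_6=\{F,A,G\}$, and let $(x_i(x,y),y_i(x,y))$ be the characterizing point of $\mathcal T_i$. Define $z_i(x)=x_i(x,0)$ for $x\in[0,1/2]$. *)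

theory Defs
  imports Complex_Main
begin

definition similitude :: "(complex \<Rightarrow> complex) \<Rightarrow> bool" where
  "similitude f \<longleftrightarrow> (\<exists>a b. a \<noteq> 0 \<and> (f = (\<lambda>z. a * z + b) \<or> f = (\<lambda>z. a * cnj z + b)))"

definition orderings :: "complex \<Rightarrow> complex \<Rightarrow> complex \<Rightarrow> (complex \<times> complex \<times> complex) set" where
  "orderings a b c = {(a,b,c),(a,c,b),(b,a,c),(b,c,a),(c,a,b),(c,b,a)}"

definition is_char_point :: "complex \<Rightarrow> complex \<Rightarrow> complex \<Rightarrow> complex \<Rightarrow> bool" where
  "is_char_point a b c w \<longleftrightarrow>
     0 \<le> Re w \<and> Re w \<le> 1/2 \<and> 0 \<le> Im w \<and>
     (\<exists>f u v t. similitude f \<and> (u, v, t) \<in> orderings a b c \<and>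
        f u = 0 \<and> f t = 1 \<and> f v = w \<and>
        dist u t \<ge> dist u v \<and> dist u t \<ge> dist v t \<and>
        dist u v \<le> dist v t)"

definition char_point :: "complex \<Rightarrow> complex \<Rightarrow> complex \<Rightarrow> complex" where
  "char_point a b c = (THE w. is_char_point a b c w)"

definition char_set :: "complex set" where
  "char_set = {w. \<exists>a b c. \<not> (a = b \<and> b = c) \<and> w = char_point a b c}"

definition subtri :: "nat \<Rightarrow> complex \<Rightarrow> complex \<times> complex \<times> complex" where
  "subtri i w =
    (let A = 0; B = w; C = 1; D = (A + B) / 2; E = (B + C) / 2; F = (C + A) / 2;
         G = (A + B + C) / 3
     in if i = 1 then (A, D, G) else if i = 2 then (D, B, G) else if i = 3 then (B, E, G)
        else if i = 4 then (E, C, G) else if i = 5 then (C, F, G) else (F, A, G))"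

definition sub_char :: "nat \<Rightarrow> real \<Rightarrow> real \<Rightarrow> complex" where
  "sub_char i x y = (case subtri i (Complex x y) of (p, q, r) \<Rightarrow> char_point p q r)"

definition xi :: "nat \<Rightarrow> real \<Rightarrow> real \<Rightarrow> real" where
  "xi i x y = Re (sub_char i x y)"

definition yi :: "nat \<Rightarrow> real \<Rightarrow> real \<Rightarrow> real" where
  "yi i x y = Im (sub_char i x y)"

definition zi :: "nat \<Rightarrow> real \<Rightarrow> real" where
  "zi i x = xi i x 0"

end

theory Submission
  imports Defs
begin

definition sq :: "complex \<Rightarrow> complex \<Rightarrow> real" where "sq p q = (cmod (p - q))^2"
definition Mx :: "complex \<Rightarrow> complex \<Rightarrow> complex \<Rightarrow> real" where
  "Mx p q r = max (sq p q) (max (sq q r) (sq r p))"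
definition Mn :: "complex \<Rightarrow> complex \<Rightarrow> complex \<Rightarrow> real" where
  "Mn p q r = min (sq p q) (min (sq q r) (sq r p))"
definition Sm :: "complex \<Rightarrow> complex \<Rightarrow> complex \<Rightarrow> real" where
  "Sm p q r = sq p q + sq q r + sq r p"
definition cr :: "complex \<Rightarrow> complex \<Rightarrow> complex \<Rightarrow> real" where
  "cr p q r = Im (cnj (q - p) * (r - p))"
definition fml :: "complex \<Rightarrow> complex \<Rightarrow> complex \<Rightarrow> complex" where
  "fml p q r = Complex ((2 * Mx p q r + 2 * Mn p q r - Sm p q r) / (2 * Mx p q r))
                        (\<bar>cr p q r\<bar> / Mx p q r)"

lemma sq_nonneg[simp]: "sq p q \<ge> 0" unfolding sq_def by simp

lemma sq_sym: "sq p q = sq q p" unfolding sq_def by (simp add: norm_minus_commute)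

lemma sq_comp: "sq p q = (Re p - Re q)^2 + (Im p - Im q)^2"
  unfolding sq_def cmod_power2 by simp

lemma sq_dist: "sq p q = (dist p q)^2" unfolding sq_def by (simp add: dist_norm)

lemma cr_comp: "cr p q r = (Re q - Re p) * (Im r - Im p) - (Im q - Im p) * (Re r - Re p)"
  unfolding cr_def by (simp add: algebra_simps)

lemma perm_inv:
  assumes "(u,v,t) \<in> orderings p q r"
  shows "Mx u v t = Mx p q r" "Mn u v t = Mn p q r" "Sm u v t = Sm p q r"
        "\<bar>cr u v t\<bar> = \<bar>cr p q r\<bar>"
proof -
  have c: "(u,v,t) = (p,q,r) \<or> (u,v,t) = (p,r,q) \<or> (u,v,t) = (q,p,r) \<or> (u,v,t) = (q,r,p)
     \<or> (u,v,t) = (r,p,q) \<or> (u,v,t) = (r,q,p)" using assms unfolding orderings_def by auto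
  show "Mx u v t = Mx p q r" using c
    by (auto simp: Mx_def sq_sym max.commute max.left_commute max.assoc)
  show "Mn u v t = Mn p q r" using c
    by (auto simp: Mn_def sq_sym min.commute min.left_commute min.assoc)
  show "Sm u v t = Sm p q r" using c
    by (auto simp: Sm_def sq_sym)
  show "\<bar>cr u v t\<bar> = \<bar>cr p q r\<bar>" using c
  proof (elim disjE)
    assume "(u,v,t) = (p,r,q)" then show ?thesis
      by (simp add: cr_comp) (smt (verit) mult.commute)
  next
    assume "(u,v,t) = (q,p,r)" then show ?thesis
      by (simp add: cr_comp) (smt (verit) left_diff_distrib right_diff_distrib mult.commute)
  next
    assume "(u,v,t) = (q,r,p)" then show ?thesis
      by (simp add: cr_comp) (smt (verit) left_diff_distrib right_diff_distrib mult.commute)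
  next
    assume "(u,v,t) = (r,p,q)" then show ?thesis
      by (simp add: cr_comp) (smt (verit) left_diff_distrib right_diff_distrib mult.commute)
  next
    assume "(u,v,t) = (r,q,p)" then show ?thesis
      by (simp add: cr_comp) (smt (verit) left_diff_distrib right_diff_distrib mult.commute)
  qed simp
qed

lemma core:
  assumes "\<omega> * (t - u) = v - u" "\<omega> = w \<or> \<omega> = cnj w" "Im w \<ge> 0"
  shows "Re w * sq t u = (sq v u + sq t u - sq v t) / 2" "Im w * sq t u = \<bar>cr u v t\<bar>"
        "cmod w * cmod (t - u) = cmod (v - u)"
proof -
  define X where "X = Re \<omega>"
  define Y where "Y = Im \<omega>"
  define b1 where "b1 = Re t - Re u"
  define b2 where "b2 = Im t - Im u"
  have e1: "Re v - Re u = X * b1 - Y * b2" using arg_cong[OF assms(1), of Re]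
    unfolding X_def Y_def b1_def b2_def by simp
  have e2: "Im v - Im u = X * b2 + Y * b1" using arg_cong[OF assms(1), of Im]
    unfolding X_def Y_def b1_def b2_def by simp
  have st: "sq t u = b1^2 + b2^2" unfolding sq_comp b1_def b2_def by simp
  have sv: "sq v u = (X * b1 - Y * b2)^2 + (X * b2 + Y * b1)^2" unfolding sq_comp using e1 e2 by simp
  have svt: "sq v t = (X * b1 - Y * b2 - b1)^2 + (X * b2 + Y * b1 - b2)^2"
  proof -
    have "Re v - Re t = X * b1 - Y * b2 - b1" using e1 unfolding b1_def by simp
    moreover have "Im v - Im t = X * b2 + Y * b1 - b2" using e2 unfolding b2_def by simp
    ultimately show ?thesis unfolding sq_comp by simp
  qed
  have crv: "cr u v t = (X * b1 - Y * b2) * b2 - (X * b2 + Y * b1) * b1"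
    unfolding cr_comp using e1 e2 unfolding b1_def b2_def by simp
  have ReX: "Re w = X" using assms(2) unfolding X_def by auto
  have ImY: "Im w = \<bar>Y\<bar>" using assms(2,3) unfolding Y_def by auto
  show "Re w * sq t u = (sq v u + sq t u - sq v t) / 2"
    unfolding ReX st sv svt by (simp add: algebra_simps power2_eq_square)
  have "cr u v t = - Y * (b1^2 + b2^2)" unfolding crv by (simp add: algebra_simps power2_eq_square)
  then show "Im w * sq t u = \<bar>cr u v t\<bar>" unfolding ImY st by (simp add: abs_mult)
  have "cmod w = cmod \<omega>" using assms(2) by auto
  then show "cmod w * cmod (t - u) = cmod (v - u)" using assms(1) by (metis norm_mult)
qed


lemma icp_extract:
  assumes "is_char_point p q r w"
  obtains u v t \<omega> where "(u,v,t) \<in> orderings p q r" "\<omega> * (t - u) = v - u" "\<omega> = w \<or> \<omega> = cnj w"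
    "t \<noteq> u" "dist u t \<ge> dist u v" "dist u t \<ge> dist v t" "dist u v \<le> dist v t"
    "0 \<le> Re w" "Re w \<le> 1/2" "0 \<le> Im w"
proof -
  from assms obtain f u v t where H: "similitude f" "(u, v, t) \<in> orderings p q r"
      "f u = 0" "f t = 1" "f v = w" "dist u t \<ge> dist u v" "dist u t \<ge> dist v t"
      "dist u v \<le> dist v t" "0 \<le> Re w" "Re w \<le> 1/2" "0 \<le> Im w"
    unfolding is_char_point_def by blast
  have tu: "t \<noteq> u" using H(3,4) by auto
  from H(1) obtain a b where ab: "a \<noteq> 0" "f = (\<lambda>z. a * z + b) \<or> f = (\<lambda>z. a * cnj z + b)"
    unfolding similitude_def by blast
  have "\<exists>\<omega>. \<omega> * (t - u) = v - u \<and> (\<omega> = w \<or> \<omega> = cnj w)"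
    using ab(2)
  proof
    assume f: "f = (\<lambda>z. a * z + b)"
    have "f t - f u = 1" "f v - f u = w" using H(3,4,5) by simp_all
    then have a1: "a * (t - u) = 1" and aw: "w = a * (v - u)" using f by (simp_all add: algebra_simps)
    have "w * (t - u) = (v - u) * (a * (t - u))" unfolding aw by (simp add: algebra_simps)
    then have "w * (t - u) = v - u" using a1 by simp
    then show ?thesis by blast
  next
    assume f: "f = (\<lambda>z. a * cnj z + b)"
    have "f t - f u = 1" "f v - f u = w" using H(3,4,5) by simp_all
    then have a1: "a * cnj (t - u) = 1" and aw: "w = a * cnj (v - u)" using f by (simp_all add: algebra_simps)
    have "w * cnj (t - u) = cnj (v - u)" using a1 unfolding aw
      by (metis mult.commute mult.left_commute mult_1_right)
    then have "cnj (w * cnj (t - u)) = cnj (cnj (v - u))" by simp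
    then have "cnj w * (t - u) = v - u" by simp
    then show ?thesis by blast
  qed
  then obtain \<omega> where "\<omega> * (t - u) = v - u" "\<omega> = w \<or> \<omega> = cnj w" by blast
  then show ?thesis using that H tu by blast
qed

lemma dist_le_sq: "dist a b \<le> dist c d \<Longrightarrow> sq a b \<le> sq c d"
  unfolding sq_dist by (simp add: power_mono)

lemma uniq:
  assumes "is_char_point p q r w"
  shows "w = fml p q r" "cmod w \<le> 1"
proof -
  obtain u v t \<omega> where H: "(u,v,t) \<in> orderings p q r" "\<omega> * (t - u) = v - u" "\<omega> = w \<or> \<omega> = cnj w"
    "t \<noteq> u" "dist u t \<ge> dist u v" "dist u t \<ge> dist v t" "dist u v \<le> dist v t"
    "0 \<le> Re w" "Re w \<le> 1/2" "0 \<le> Im w"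
    using icp_extract[OF assms] by blast
  note C = core[OF H(2,3,10)]
  have d1: "sq u v \<le> sq u t" "sq v t \<le> sq u t" "sq u v \<le> sq v t"
    using H(5,6,7) dist_le_sq by auto
  have pos: "sq t u > 0" using H(4) unfolding sq_def by simp
  have mx: "Mx u v t = sq t u" using d1 by (simp add: Mx_def sq_sym max_def)
  have mn: "Mn u v t = sq u v" using d1 by (simp add: Mn_def sq_sym min_def)
  have sm: "Sm u v t = sq u v + sq v t + sq t u" by (simp add: Sm_def)
  have re: "Re w = (2 * Mx u v t + 2 * Mn u v t - Sm u v t) / (2 * Mx u v t)"
    using C(1) pos unfolding mx mn sm by (simp add: field_simps sq_sym)
  have im: "Im w = \<bar>cr u v t\<bar> / Mx u v t"
    using C(2) pos unfolding mx by (simp add: field_simps)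
  show "w = fml p q r" unfolding fml_def using re im perm_inv[OF H(1)]
    by (simp add: complex_eq_iff)
  have "cmod (v - u) \<le> cmod (t - u)" using H(5) by (simp add: dist_norm norm_minus_commute)
  then have "cmod w * cmod (t - u) \<le> 1 * cmod (t - u)" using C(3) by simp
  then show "cmod w \<le> 1" using H(4) by (meson mult_le_cancel_right norm_ge_zero order.strict_iff_not zero_less_norm_iff right_minus_eq)
qed

lemma ex_ord: "\<exists>u v t. (u,v,t) \<in> orderings p q r \<and> dist u t \<ge> dist u v \<and> dist u t \<ge> dist v t \<and> dist u v \<le> dist v t"
proof -
  define A where "A = dist p q"
  define B where "B = dist q r"
  define C where "C = dist r p"
  have o: "(p,q,r) \<in> orderings p q r" "(p,r,q) \<in> orderings p q r" "(q,p,r) \<in> orderings p q r"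
     "(q,r,p) \<in> orderings p q r" "(r,p,q) \<in> orderings p q r" "(r,q,p) \<in> orderings p q r"
    unfolding orderings_def by auto
  have d: "dist q p = A" "dist r q = B" "dist p r = C" unfolding A_def B_def C_def by (simp_all add: dist_commute)
  consider "A \<le> B" "B \<le> C" | "A \<le> C" "C \<le> B" | "B \<le> A" "A \<le> C" | "B \<le> C" "C \<le> A"
     | "C \<le> A" "A \<le> B" | "C \<le> B" "B \<le> A" by linarith
  then show ?thesis
  proof cases
    case 1 then show ?thesis using o(1) by (intro exI[of _ p] exI[of _ q] exI[of _ r]) (simp add: d A_def B_def C_def)
  next
    case 2 then show ?thesis using o(3) by (intro exI[of _ q] exI[of _ p] exI[of _ r]) (simp add: d A_def B_def C_def)
  next
    case 3 then show ?thesis using o(6) by (intro exI[of _ r] exI[of _ q] exI[of _ p]) (simp add: d A_def B_def C_def)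
  next
    case 4 then show ?thesis using o(4) by (intro exI[of _ q] exI[of _ r] exI[of _ p]) (simp add: d A_def B_def C_def)
  next
    case 5 then show ?thesis using o(5) by (intro exI[of _ r] exI[of _ p] exI[of _ q]) (simp add: d A_def B_def C_def)
  next
    case 6 then show ?thesis using o(2) by (intro exI[of _ p] exI[of _ r] exI[of _ q]) (simp add: d A_def B_def C_def)
  qed
qed

lemma exist:
  assumes "\<not> (p = q \<and> q = r)"
  shows "\<exists>w. is_char_point p q r w"
proof -
  obtain u v t where H: "(u,v,t) \<in> orderings p q r" "dist u t \<ge> dist u v" "dist u t \<ge> dist v t"
     "dist u v \<le> dist v t" using ex_ord by blast
  have tu: "t \<noteq> u"
  proof
    assume "t = u"
    then have "u = v" "v = t" using H(2,3) by auto
    then show False using H(1) assms \<open>t = u\<close> unfolding orderings_def by auto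
  qed
  define z where "z = (v - u) / (t - u)"
  have zz: "z * (t - u) = v - u" unfolding z_def using tu by simp
  define w where "w = (if Im z \<ge> 0 then z else cnj z)"
  have zw: "z = w \<or> z = cnj w" "Im w \<ge> 0" unfolding w_def by auto
  note C = core[OF zz zw]
  have d1: "sq u v \<le> sq u t" "sq v t \<le> sq u t" "sq u v \<le> sq v t"
    using H(2,3,4) dist_le_sq by auto
  have pos: "sq t u > 0" using tu unfolding sq_def by simp
  have e: "sq v u = sq u v" "sq t u = sq u t" by (rule sq_sym)+
  have a1: "sq v u + sq t u - sq v t \<ge> 0" "sq v u + sq t u - sq v t \<le> sq t u"
    using d1 sq_nonneg[of u v] unfolding e by linarith+
  have "Re w * sq t u \<ge> 0" unfolding C(1) using a1 by simp
  then have r0: "Re w \<ge> 0" using pos by (simp add: zero_le_mult_iff)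
  have "Re w * sq t u \<le> (1/2) * sq t u" unfolding C(1) using a1 by simp
  then have r1: "Re w \<le> 1/2" using pos by simp
  define f where "f = (if Im z \<ge> 0 then (\<lambda>x. (1 / (t - u)) * x + (- u / (t - u)))
                       else (\<lambda>x. cnj (1 / (t - u)) * cnj x + (- cnj (u / (t - u)))))"
  have nz: "1 / (t - u) \<noteq> 0" "cnj (1 / (t - u)) \<noteq> 0" using tu by simp_all
  have sim: "similitude f"
  proof (cases "Im z \<ge> 0")
    case True
    then have "f = (\<lambda>x. (1 / (t - u)) * x + (- u / (t - u)))" by (simp add: f_def)
    then show ?thesis unfolding similitude_def using nz by blast
  next
    case False
    then have "f = (\<lambda>x. cnj (1 / (t - u)) * cnj x + (- cnj (u / (t - u))))" by (simp add: f_def)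
    then show ?thesis unfolding similitude_def using nz by blast
  qed
  have tu': "t - u \<noteq> 0" using tu by simp
  have g: "\<And>x. f x = (if Im z \<ge> 0 then (1 / (t - u)) * x + (- u / (t - u))
                       else cnj ((1 / (t - u)) * x + (- u / (t - u))))"
    unfolding f_def by simp
  have k0: "(1 / (t - u)) * u + (- u / (t - u)) = 0" by simp
  have k1: "(1 / (t - u)) * t + (- u / (t - u)) = 1" using tu' by (simp add: divide_simps)
  have k2: "(1 / (t - u)) * v + (- u / (t - u)) = z" unfolding z_def using tu' by (simp add: divide_simps)
  have fu: "f u = 0" unfolding g k0 by simp
  have ft: "f t = 1" unfolding g k1 by simp
  have fv: "f v = w" unfolding g k2 w_def by simp
  have "is_char_point p q r w" unfolding is_char_point_def
    using r0 r1 zw(2) sim H fu ft fv by blast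
  then show ?thesis by blast
qed

lemma char_point_fml:
  assumes "\<not> (p = q \<and> q = r)"
  shows "char_point p q r = fml p q r" "is_char_point p q r (fml p q r)"
proof -
  obtain w where w: "is_char_point p q r w" using exist[OF assms] by blast
  then have "w = fml p q r" by (rule uniq)
  with w show i: "is_char_point p q r (fml p q r)" by simp
  show "char_point p q r = fml p q r" unfolding char_point_def
    using i uniq(1) by blast
qed


lemma frac_bound:
  fixes X M d k :: real
  assumes "\<bar>X\<bar> \<le> d" "M \<ge> k" "k > 0"
  shows "\<bar>X / M\<bar> \<le> d / k"
proof -
  have Mp: "M > 0" using assms by linarith
  have "\<bar>X / M\<bar> = \<bar>X\<bar> / M" using Mp by simp
  also have "\<dots> \<le> d / M" using assms(1) Mp by (simp add: divide_right_mono)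
  also have "\<dots> \<le> d / k" using assms Mp
    by (meson abs_ge_zero divide_left_mono mult_pos_pos order_trans)
  finally show ?thesis .
qed

lemma abs_max_diff: "\<bar>(x::real) - x'\<bar> \<le> d \<Longrightarrow> \<bar>y - y'\<bar> \<le> d \<Longrightarrow> \<bar>max x y - max x' y'\<bar> \<le> d"
  by (simp add: max_def abs_le_iff)
lemma abs_min_diff: "\<bar>(x::real) - x'\<bar> \<le> d \<Longrightarrow> \<bar>y - y'\<bar> \<le> d \<Longrightarrow> \<bar>min x y - min x' y'\<bar> \<le> d"
  by (simp add: min_def abs_le_iff)

lemma real_lip:
  fixes a b c a' b' c' d k :: real
  assumes nn: "0 \<le> a" "0 \<le> b" "0 \<le> c" "0 \<le> a'" "0 \<le> b'" "0 \<le> c'"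
    and k: "k > 0" "max a (max b c) \<ge> k" "max a' (max b' c') \<ge> k"
    and dd: "\<bar>a - a'\<bar> \<le> d" "\<bar>b - b'\<bar> \<le> d" "\<bar>c - c'\<bar> \<le> d"
  shows "\<bar>(2 * max a (max b c) + 2 * min a (min b c) - (a + b + c)) / (2 * max a (max b c))
        - (2 * max a' (max b' c') + 2 * min a' (min b' c') - (a' + b' + c')) / (2 * max a' (max b' c'))\<bar>
         \<le> 4 * d / k"
proof -
  define M where "M = max a (max b c)"
  define m where "m = min a (min b c)"
  define M' where "M' = max a' (max b' c')"
  define m' where "m' = min a' (min b' c')"
  define N where "N = 2 * m - (a + b + c)"
  define N' where "N' = 2 * m' - (a' + b' + c')"
  have d0: "d \<ge> 0" using dd(1) by linarith
  have MM: "\<bar>M - M'\<bar> \<le> d" unfolding M_def M'_def using dd by (intro abs_max_diff)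
  have mm: "\<bar>m - m'\<bar> \<le> d" unfolding m_def m'_def using dd by (intro abs_min_diff)
  have NN: "\<bar>N - N'\<bar> \<le> 5 * d" unfolding N_def N'_def using mm dd by linarith
  have Mk: "M \<ge> k" "M' \<ge> k" using k unfolding M_def M'_def by auto
  have f: "a' \<le> M'" "b' \<le> M'" "c' \<le> M'" "m' \<le> a'" "m' \<ge> 0"
    unfolding M'_def m'_def using nn by auto
  have N'b: "\<bar>N'\<bar> \<le> 3 * M'" unfolding N'_def using f nn by linarith
  have Mp: "M > 0" "M' > 0" using Mk k by linarith+
  have e1: "(2 * M + 2 * m - (a + b + c)) / (2 * M) = 1 + N / M / 2"
    unfolding N_def using Mp by (simp add: field_simps)
  have e2: "(2 * M' + 2 * m' - (a' + b' + c')) / (2 * M') = 1 + N' / M' / 2"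
    unfolding N'_def using Mp by (simp add: field_simps)
  have e3: "N / M - N' / M' = (N - N') / M + (N' / M') * ((M' - M) / M)"
    using Mp by (simp add: field_simps)
  have b1: "\<bar>(N - N') / M\<bar> \<le> 5 * d / k" using frac_bound[OF NN Mk(1) k(1)] .
  have b2: "\<bar>(M' - M) / M\<bar> \<le> d / k" using frac_bound[OF _ Mk(1) k(1), of "M' - M" d] MM by simp
  have b3: "\<bar>N' / M'\<bar> \<le> 3" using frac_bound[OF N'b, of M'] Mp by simp
  have "\<bar>N' / M'\<bar> * \<bar>(M' - M) / M\<bar> \<le> 3 * (d / k)"
    by (rule mult_mono[OF b3 b2]) simp_all
  then have "\<bar>(N' / M') * ((M' - M) / M)\<bar> \<le> 3 * (d / k)" by (simp only: abs_mult)
  then have x1: "\<bar>(N' / M') * ((M' - M) / M)\<bar> \<le> 3 * (d / k)" .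
  have x2: "\<bar>(N - N') / M\<bar> \<le> 5 * (d / k)" using b1 by simp
  have "\<bar>N / M - N' / M'\<bar> \<le> 8 * (d / k)" unfolding e3
    by (rule order_trans[OF abs_triangle_ineq], rule order_trans[OF add_mono[OF x2 x1]], simp)
  moreover have "(1 + N / M / 2) - (1 + N' / M' / 2) = (N / M - N' / M') / 2" by (simp add: field_simps)
  ultimately have "\<bar>(1 + N / M / 2) - (1 + N' / M' / 2)\<bar> \<le> 4 * (d / k)" by simp
  then show ?thesis unfolding M_def[symmetric] m_def[symmetric] M'_def[symmetric] m'_def[symmetric] e1 e2
    by simp
qed

lemma lip:
  assumes "c > 0" "Mx p q r \<ge> c" "Mx p' q' r' \<ge> c"
    "\<bar>sq p q - sq p' q'\<bar> \<le> d" "\<bar>sq q r - sq q' r'\<bar> \<le> d" "\<bar>sq r p - sq r' p'\<bar> \<le> d"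
  shows "\<bar>Re (fml p q r) - Re (fml p' q' r')\<bar> \<le> 4 * d / c"
proof -
  have m1: "max (sq p q) (max (sq q r) (sq r p)) \<ge> c" using assms(2) unfolding Mx_def .
  have m2: "max (sq p' q') (max (sq q' r') (sq r' p')) \<ge> c" using assms(3) unfolding Mx_def .
  note R = real_lip[OF sq_nonneg sq_nonneg sq_nonneg sq_nonneg sq_nonneg sq_nonneg assms(1) m1 m2 assms(4,5,6)]
  show ?thesis unfolding fml_def Mx_def Mn_def Sm_def complex.sel by (rule R)
qed

lemma im_bound:
  assumes "c > 0" "Mx p q r \<ge> c"
  shows "\<bar>Im (fml p q r)\<bar> \<le> \<bar>cr p q r\<bar> / c"
proof -
  have "Mx p q r > 0" using assms by linarith
  then have "\<bar>Im (fml p q r)\<bar> = \<bar>cr p q r\<bar> / Mx p q r" unfolding fml_def by simp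
  also have "\<dots> \<le> \<bar>cr p q r\<bar> / c" using assms by (simp add: divide_left_mono)
  finally show ?thesis .
qed

lemma nondeg: "Mx p q r > 0 \<Longrightarrow> \<not> (p = q \<and> q = r)"
  unfolding Mx_def sq_def by auto


lemma Mx_ge: "sq p q \<le> Mx p q r" "sq q r \<le> Mx p q r" "sq r p \<le> Mx p q r"
  unfolding Mx_def by auto

definition good :: "real \<Rightarrow> complex \<times> complex \<times> complex \<Rightarrow> complex \<times> complex \<times> complex \<Rightarrow> bool" where
  "good y T T0 = (case T of (p, q, r) \<Rightarrow> case T0 of (p', q', r') \<Rightarrow>
     Mx p q r \<ge> 1/16 \<and> Mx p' q' r' \<ge> 1/16 \<and> \<bar>sq p q - sq p' q'\<bar> \<le> y^2/2 \<and>
     \<bar>sq q r - sq q' r'\<bar> \<le> y^2/2 \<and> \<bar>sq r p - sq r' p'\<bar> \<le> y^2/2 \<and> \<bar>cr p q r\<bar> \<le> y/6)"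

lemma good_intro:
  assumes "Mx p q r \<ge> 1/16" "Mx p' q' r' \<ge> 1/16" "\<bar>sq p q - sq p' q'\<bar> \<le> y^2/2"
     "\<bar>sq q r - sq q' r'\<bar> \<le> y^2/2" "\<bar>sq r p - sq r' p'\<bar> \<le> y^2/2" "\<bar>cr p q r\<bar> \<le> y/6"
  shows "good y (p, q, r) (p', q', r')"
  using assms unfolding good_def by simp

lemma sub1: "subtri 1 w = (0, w/2, (w+1)/3)" unfolding subtri_def Let_def by (simp add: add.commute)
lemma sub2: "subtri 2 w = (w/2, w, (w+1)/3)" unfolding subtri_def Let_def by (simp add: add.commute)
lemma sub3: "subtri 3 w = (w, (w+1)/2, (w+1)/3)" unfolding subtri_def Let_def by (simp add: add.commute)
lemma sub4: "subtri 4 w = ((w+1)/2, 1, (w+1)/3)" unfolding subtri_def Let_def by (simp add: add.commute)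
lemma sub5: "subtri 5 w = (1, 1/2, (w+1)/3)" unfolding subtri_def Let_def by (simp add: add.commute)
lemma sub6: "subtri 6 w = (1/2, 0, (w+1)/3)" unfolding subtri_def Let_def by (simp add: add.commute)

lemma mxb: assumes "sq a b = (P + y * y) / k" "c * k \<le> P" "(k::real) > 0" shows "c \<le> sq a b"
proof -
  have "sq a b * k = P + y * y" using assms(1,3) by simp
  then have "c * k \<le> sq a b * k" using assms(2) zero_le_square[of y] by linarith
  then show ?thesis using assms(3) by simp
qed

lemma good1: fixes x y :: real assumes "0 \<le> x" "x \<le> 1/2" "0 \<le> y"
  shows "good y (subtri 1 (Complex x y)) (subtri 1 (Complex x 0))"
  unfolding sub1
proof (rule good_intro)
  have h: "1 \<le> (x+1)*(x+1)" using mult_mono[of 1 "x+1" 1 "x+1"] assms by simp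
  have e: "\<And>y. sq ((Complex x y + 1)/3) 0 = ((x+1)*(x+1) + y * y)/9"
    by (simp add: sq_comp power2_eq_square field_simps; algebra)
  have "\<And>y. sq ((Complex x y + 1)/3) 0 \<ge> 1/16" by (rule mxb[OF e]) (use h in simp_all)
  then show "Mx 0 (Complex x y / 2) ((Complex x y + 1)/3) \<ge> 1/16"
      "Mx 0 (Complex x 0 / 2) ((Complex x 0 + 1)/3) \<ge> 1/16"
    by (meson Mx_ge(3) order_trans)+
qed (use assms in \<open>simp_all add: sq_comp cr_comp power2_eq_square algebra_simps\<close>)

lemma good2: fixes x y :: real assumes "0 \<le> x" "x \<le> 1/2" "0 \<le> y"
  shows "good y (subtri 2 (Complex x y)) (subtri 2 (Complex x 0))"
  unfolding sub2
proof (rule good_intro)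
  have h: "9/4 \<le> (2-x)*(2-x)" using mult_mono[of "3/2" "2-x" "3/2" "2-x"] assms by simp
  have e: "\<And>y. sq ((Complex x y + 1)/3) (Complex x y / 2) = ((2-x)*(2-x) + y * y)/36"
    by (simp add: sq_comp power2_eq_square field_simps; algebra)
  have "\<And>y. sq ((Complex x y + 1)/3) (Complex x y / 2) \<ge> 1/16" by (rule mxb[OF e]) (use h in simp_all)
  then show "Mx (Complex x y / 2) (Complex x y) ((Complex x y + 1)/3) \<ge> 1/16"
      "Mx (Complex x 0 / 2) (Complex x 0) ((Complex x 0 + 1)/3) \<ge> 1/16"
    by (meson Mx_ge(3) order_trans)+
qed (use assms in \<open>simp_all add: sq_comp cr_comp power2_eq_square algebra_simps\<close>)


lemma good3: fixes x y :: real assumes "0 \<le> x" "x \<le> 1/2" "0 \<le> y"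
  shows "good y (subtri 3 (Complex x y)) (subtri 3 (Complex x 0))"
  unfolding sub3
proof (rule good_intro)
  have h: "1/4 \<le> (1-x)*(1-x)" using mult_mono[of "1/2" "1-x" "1/2" "1-x"] assms by simp
  have e: "\<And>y. sq (Complex x y) ((Complex x y + 1)/2) = ((1-x)*(1-x) + y * y)/4"
    by (simp add: sq_comp power2_eq_square field_simps; algebra)
  have "\<And>y. sq (Complex x y) ((Complex x y + 1)/2) \<ge> 1/16" by (rule mxb[OF e]) (use h in simp_all)
  then show "Mx (Complex x y) ((Complex x y + 1)/2) ((Complex x y + 1)/3) \<ge> 1/16"
      "Mx (Complex x 0) ((Complex x 0 + 1)/2) ((Complex x 0 + 1)/3) \<ge> 1/16"
    by (meson Mx_ge(1) order_trans)+
  have "cr (Complex x y) ((Complex x y + 1)/2) ((Complex x y + 1)/3) = - y / 6"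
    by (simp add: cr_comp field_simps)
  then show "\<bar>cr (Complex x y) ((Complex x y + 1)/2) ((Complex x y + 1)/3)\<bar> \<le> y / 6"
    using assms by simp
qed (use assms in \<open>simp_all add: sq_comp cr_comp power2_eq_square algebra_simps\<close>)

lemma good4: fixes x y :: real assumes "0 \<le> x" "x \<le> 1/2" "0 \<le> y"
  shows "good y (subtri 4 (Complex x y)) (subtri 4 (Complex x 0))"
  unfolding sub4
proof (rule good_intro)
  have h: "1/4 \<le> (1-x)*(1-x)" using mult_mono[of "1/2" "1-x" "1/2" "1-x"] assms by simp
  have e: "\<And>y. sq ((Complex x y + 1)/2) 1 = ((1-x)*(1-x) + y * y)/4"
    by (simp add: sq_comp power2_eq_square field_simps; algebra)
  have "\<And>y. sq ((Complex x y + 1)/2) 1 \<ge> 1/16" by (rule mxb[OF e]) (use h in simp_all)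
  then show "Mx ((Complex x y + 1)/2) 1 ((Complex x y + 1)/3) \<ge> 1/16"
      "Mx ((Complex x 0 + 1)/2) 1 ((Complex x 0 + 1)/3) \<ge> 1/16"
    by (meson Mx_ge(1) order_trans)+
qed (use assms in \<open>simp_all add: sq_comp cr_comp power2_eq_square algebra_simps\<close>)

lemma good5: fixes x y :: real assumes "0 \<le> x" "x \<le> 1/2" "0 \<le> y"
  shows "good y (subtri 5 (Complex x y)) (subtri 5 (Complex x 0))"
  unfolding sub5
proof (rule good_intro)
  have "sq 1 (1/2) = 1/4" by (simp add: sq_comp power2_eq_square)
  then have "1/16 \<le> sq 1 (1/2)" by simp
  then show "Mx 1 (1/2) ((Complex x y + 1)/3) \<ge> 1/16"
      "Mx 1 (1/2) ((Complex x 0 + 1)/3) \<ge> 1/16"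
    by (meson Mx_ge(1) order_trans)+
qed (use assms in \<open>simp_all add: sq_comp cr_comp power2_eq_square algebra_simps\<close>)

lemma good6: fixes x y :: real assumes "0 \<le> x" "x \<le> 1/2" "0 \<le> y"
  shows "good y (subtri 6 (Complex x y)) (subtri 6 (Complex x 0))"
  unfolding sub6
proof (rule good_intro)
  have "sq (1/2) 0 = 1/4" by (simp add: sq_comp power2_eq_square)
  then have "1/16 \<le> sq (1/2) 0" by simp
  then show "Mx (1/2) 0 ((Complex x y + 1)/3) \<ge> 1/16"
      "Mx (1/2) 0 ((Complex x 0 + 1)/3) \<ge> 1/16"
    by (meson Mx_ge(1) order_trans)+
qed (use assms in \<open>simp_all add: sq_comp cr_comp power2_eq_square algebra_simps\<close>)


lemma good_all:
  fixes x y :: real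
  assumes "i \<in> {1..6::nat}" "0 \<le> x" "x \<le> 1/2" "0 \<le> y"
  shows "good y (subtri i (Complex x y)) (subtri i (Complex x 0))"
proof -
  have "i = 1 \<or> i = 2 \<or> i = 3 \<or> i = 4 \<or> i = 5 \<or> i = 6" using assms(1) by auto
  then show ?thesis using good1 good2 good3 good4 good5 good6 assms(2-4) by blast
qed

lemma char_set_props:
  assumes "Complex x y \<in> char_set"
  shows "0 \<le> x" "x \<le> 1/2" "0 \<le> y" "y \<le> 1"
proof -
  obtain a b c where nd: "\<not> (a = b \<and> b = c)" and w: "Complex x y = char_point a b c"
    using assms unfolding char_set_def by blast
  have icp: "is_char_point a b c (Complex x y)" using char_point_fml[OF nd] w by simp
  then show "0 \<le> x" "x \<le> 1/2" "0 \<le> y" unfolding is_char_point_def by auto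
  have "cmod (Complex x y) \<le> 1" using uniq(2)[OF icp] .
  moreover have "\<bar>Im (Complex x y)\<bar> \<le> cmod (Complex x y)" by (rule abs_Im_le_cmod)
  ultimately show "y \<le> 1" by simp
qed

theorem lemma7:
  shows "\<exists>K>0. \<forall>i\<in>{1..6::nat}. \<forall>x y. Complex x y \<in> char_set \<longrightarrow>
           max \<bar>xi i x y - zi i x\<bar> \<bar>yi i x y\<bar> \<le> K * y"
proof (intro exI[of _ 32] conjI ballI allI impI)
  show "(0::real) < 32" by simp
  fix i :: nat and x y :: real
  assume i: "i \<in> {1..6}" and cs: "Complex x y \<in> char_set"
  note P = char_set_props[OF cs]
  obtain p q r where T: "subtri i (Complex x y) = (p, q, r)" by (metis prod_cases3)
  obtain p' q' r' where T0: "subtri i (Complex x 0) = (p', q', r')" by (metis prod_cases3)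
  have G: "good y (p, q, r) (p', q', r')" using good_all[OF i P(1,2,3)] T T0 by simp
  then have g: "Mx p q r \<ge> 1/16" "Mx p' q' r' \<ge> 1/16" "\<bar>sq p q - sq p' q'\<bar> \<le> y^2/2"
     "\<bar>sq q r - sq q' r'\<bar> \<le> y^2/2" "\<bar>sq r p - sq r' p'\<bar> \<le> y^2/2" "\<bar>cr p q r\<bar> \<le> y/6"
    unfolding good_def by simp_all
  have nd: "\<not> (p = q \<and> q = r)" "\<not> (p' = q' \<and> q' = r')" using nondeg g(1,2) by force+
  have sc: "sub_char i x y = fml p q r" unfolding sub_char_def T using char_point_fml(1)[OF nd(1)] by simp
  have sc0: "sub_char i x 0 = fml p' q' r'" unfolding sub_char_def T0 using char_point_fml(1)[OF nd(2)] by simp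
  have "\<bar>Re (fml p q r) - Re (fml p' q' r')\<bar> \<le> 4 * (y^2/2) / (1/16)"
    by (rule lip[OF _ g(1,2,3,4,5)]) simp
  also have "\<dots> = 32 * (y * y)" by (simp add: power2_eq_square)
  also have "\<dots> \<le> 32 * y" using P(3,4) by (simp add: mult_left_le)
  finally have r: "\<bar>xi i x y - zi i x\<bar> \<le> 32 * y" unfolding xi_def zi_def sc sc0 .
  have "\<bar>Im (fml p q r)\<bar> \<le> \<bar>cr p q r\<bar> / (1/16)" by (rule im_bound[OF _ g(1)]) simp
  also have "\<dots> \<le> (y/6) / (1/16)" using g(6) by (simp add: divide_right_mono)
  also have "\<dots> \<le> 32 * y" using P(3) by simp
  finally have m: "\<bar>yi i x y\<bar> \<le> 32 * y" unfolding yi_def sc .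
  show "max \<bar>xi i x y - zi i x\<bar> \<bar>yi i x y\<bar> \<le> 32 * y" using r m by simp
qed

end
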